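(* Let $K\in\mathbb{R}^{m\times n}$, $P_0\in\mathbb{R}^{n\times n}$ symmetric, and $H\in\mathbb{R}^{m\times m}$ diagonal with $P_0+K^\top HK\succ0$. Suppose $H=H_p-H_n$ with diagonal $H_p\succ0$, $H_n\succeq0$ and $P_0-K^\top H_nK\succeq0$. Let $$V(x)=\tfrac12\big(x^\top P_0x+x^\top K^\top HKx-\mathrm{dz}(Kx)^\top H\,\mathrm{dz}(Kx)\big)=\begin{bmatrix}x\\ \mathrm{dz}(Kx)\end{bmatrix}^\top Q\begin{bmatrix}x\\ \mathrm{dz}(Kx)\end{bmatrix},\quad Q=\tfrac12\begin{bmatrix}P_0+K^\top HK&0\\0&-H\end{bmatrix}.$$ Then there exists a diagonal $T_0\succ0$ with $Q_{11}\succ0$ and $Q-\Sigma_0\succeq0$; consequently $V$ is positive definite and radially unbounded.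
   Context: Decentralized saturation $\mathrm{sat}(u)_i=\min\{\overline{u}_i,\max\{-\underline{u}_i,u_i\}\}$ with $\overline{u}_i,\underline{u}_i>0$; $\mathrm{dz}(u)=u-\mathrm{sat}(u)$. $Q_{11}$ denotes the upper-left $n\times n$ block of $Q$, and $\Sigma_0=\begin{bmatrix}0&K^\top T_0\\ T_0K&-2T_0\end{bmatrix}$. *)

theory Defs
  imports "HOL-Analysis.Analysis"
begin

definition sat :: "real^'m \<Rightarrow> real^'m \<Rightarrow> real^'m \<Rightarrow> real^'m" where
  "sat ub lb u = (\<chi> i. min (ub$i) (max (-(lb$i)) (u$i)))"

definition dz :: "real^'m \<Rightarrow> real^'m \<Rightarrow> real^'m \<Rightarrow> real^'m" where
  "dz ub lb u = u - sat ub lb u"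

definition diag_mat :: "real^'m^'m \<Rightarrow> bool" where
  "diag_mat A \<longleftrightarrow> (\<forall>i j. i \<noteq> j \<longrightarrow> A$i$j = 0)"

definition sym_mat :: "real^'m^'m \<Rightarrow> bool" where
  "sym_mat A \<longleftrightarrow> transpose A = A"

definition pos_def :: "real^'m^'m \<Rightarrow> bool" where
  "pos_def A \<longleftrightarrow> sym_mat A \<and> (\<forall>x. x \<noteq> 0 \<longrightarrow> x \<bullet> (A *v x) > 0)"

definition psd :: "real^'m^'m \<Rightarrow> bool" where
  "psd A \<longleftrightarrow> sym_mat A \<and> (\<forall>x. x \<bullet> (A *v x) \<ge> 0)"

definition blk :: "real^'n::finite^'n \<Rightarrow> real^'m^'n \<Rightarrow> real^'n^'m \<Rightarrow> real^'m::finite^'m \<Rightarrow> real^('n+'m)^('n+'m)" where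
  "blk A B C D = (\<chi> i j. (case i of
       Inl a \<Rightarrow> (case j of Inl b \<Rightarrow> A$a$b | Inr b \<Rightarrow> B$a$b)
     | Inr a \<Rightarrow> (case j of Inl b \<Rightarrow> C$a$b | Inr b \<Rightarrow> D$a$b)))"

definition blk11 :: "real^('n::finite+'m::finite)^('n+'m) \<Rightarrow> real^'n^'n" where
  "blk11 M = (\<chi> a b. M $ Inl a $ Inl b)"

definition Qmat :: "real^'n::finite^'n \<Rightarrow> real^'n^'m \<Rightarrow> real^'m::finite^'m \<Rightarrow> real^('n+'m)^('n+'m)" where
  "Qmat P0 K H = (1/2) *\<^sub>R blk (P0 + transpose K ** H ** K) 0 0 (- H)"

definition Sigma0 :: "real^'n::finite^'m::finite \<Rightarrow> real^'m^'m \<Rightarrow> real^('n+'m)^('n+'m)" where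
  "Sigma0 K T0 = blk 0 (transpose K ** T0) (T0 ** K) (-(2 *\<^sub>R T0))"

definition Vfun :: "real^'m \<Rightarrow> real^'m \<Rightarrow> real^'n^'n \<Rightarrow> real^'n^'m \<Rightarrow> real^'m^'m \<Rightarrow> real^'n \<Rightarrow> real" where
  "Vfun ub lb P0 K H x = (1/2) * (x \<bullet> (P0 *v x) + x \<bullet> ((transpose K ** H ** K) *v x)
      - dz ub lb (K *v x) \<bullet> (H *v dz ub lb (K *v x)))"

end

theory Submission
  imports Defs
begin

lemma dot_transpose: "(x::real^'n) \<bullet> (transpose (K::real^'n^'m) *v w) = (K *v x) \<bullet> w"
  by (simp add: inner_vec_def matrix_vector_mult_def transpose_def sum_distrib_left sum_distrib_right
      mult_ac) (rule sum.swap)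

lemma dot_vm: "(x::real^'n) \<bullet> (w v* (K::real^'n^'m)) = (K *v x) \<bullet> w"
  by (simp add: inner_vec_def matrix_vector_mult_def vector_matrix_mult_def sum_distrib_left sum_distrib_right
      mult_ac) (rule sum.swap)

lemma quad_KDK: "(x::real^'n) \<bullet> ((transpose (K::real^'n^'m) ** D ** K) *v x) = (K *v x) \<bullet> (D *v (K *v x))"
  by (metis matrix_vector_mul_assoc dot_transpose)

lemma diag_mv: "diag_mat D \<Longrightarrow> (D::real^'m^'m) *v u = (\<chi> i. D$i$i * u$i)"
  unfolding diag_mat_def matrix_vector_mult_def
  apply (simp add: vec_eq_iff)
  apply (intro allI)
  apply (subst sum.remove[of UNIV], simp, simp)
  apply (subst sum.neutral) apply auto
  done

lemma diag_quad: "diag_mat D \<Longrightarrow> v \<bullet> ((D::real^'m^'m) *v u) = (\<Sum>i\<in>UNIV. D$i$i * v$i * u$i)"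
  by (simp add: diag_mv inner_vec_def mult_ac)

lemma diag_sym: "diag_mat D \<Longrightarrow> sym_mat D"
  unfolding diag_mat_def sym_mat_def transpose_def by (simp add: vec_eq_iff) metis

lemma if01_mult: "(if c then 1 else 0) * (x::real) = (if c then x else 0)" "x * (if c then 1 else 0) = (if c then x else 0)"
  by simp_all

lemma axis_quad: "axis i 1 \<bullet> ((D::real^'m^'m) *v axis i 1) = D$i$i"
  by (simp add: inner_vec_def matrix_vector_mult_def axis_def if01_mult)

lemma diag_entry_pos: "pos_def (D::real^'m^'m) \<Longrightarrow> D$i$i > 0"
proof -
  assume a: "pos_def D"
  have "axis i 1 \<noteq> (0::real^'m)" by (metis axis_nth zero_index zero_neq_one)
  with a have "axis i 1 \<bullet> (D *v axis i 1) > 0" unfolding pos_def_def by blast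
  then show ?thesis by (simp add: axis_quad)
qed
lemma sum_plus_univ: "(\<Sum>i\<in>(UNIV::('a::finite+'b::finite) set). f i) = (\<Sum>a\<in>UNIV. f (Inl a)) + (\<Sum>b\<in>UNIV. f (Inr b))"
  by (subst UNIV_Plus_UNIV[symmetric], subst sum.Plus) (simp_all add: o_def)

lemma blk_mv: "blk A B C D *v z = (\<chi> i. case i of Inl a \<Rightarrow> (A *v (\<chi> a. z$Inl a) + B *v (\<chi> b. z$Inr b))$a
   | Inr b \<Rightarrow> (C *v (\<chi> a. z$Inl a) + D *v (\<chi> b. z$Inr b))$b)"
  by (simp add: vec_eq_iff blk_def matrix_vector_mult_def sum_plus_univ split: sum.split)

lemma blk_quad: "(z::real^('n::finite+'m::finite)) \<bullet> (blk A B C D *v z) =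
  (\<chi> a. z$Inl a) \<bullet> (A *v (\<chi> a. z$Inl a)) + (\<chi> a. z$Inl a) \<bullet> (B *v (\<chi> b. z$Inr b))
  + (\<chi> b. z$Inr b) \<bullet> (C *v (\<chi> a. z$Inl a)) + (\<chi> b. z$Inr b) \<bullet> (D *v (\<chi> b. z$Inr b))"
  apply (subst inner_vec_def)
  apply (subst sum_plus_univ)
  apply (simp add: blk_mv inner_vec_def algebra_simps sum.distrib)
  done

lemma blk_transpose: "transpose (blk A B C D) = blk (transpose A) (transpose C) (transpose B) (transpose D)"
  by (simp add: vec_eq_iff blk_def transpose_def split: sum.split)

lemma blk_scale: "c *\<^sub>R blk A B C D = blk (c *\<^sub>R A) (c *\<^sub>R B) (c *\<^sub>R C) (c *\<^sub>R D)"
  by (simp add: vec_eq_iff blk_def split: sum.split)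

lemma blk_diff: "blk A B C D - blk A' B' C' D' = blk (A - A') (B - B') (C - C') (D - D')"
  by (simp add: vec_eq_iff blk_def split: sum.split)

lemma blk11_blk: "blk11 (blk A B C D) = A"
  by (simp add: vec_eq_iff blk_def blk11_def)
lemma transpose_add': "transpose (A + B) = transpose A + transpose (B::real^'n^'m)"
  by (simp add: vec_eq_iff transpose_def)
lemma transpose_diff': "transpose (A - B) = transpose A - transpose (B::real^'n^'m)"
  by (simp add: vec_eq_iff transpose_def)
lemma transpose_neg': "transpose (- A) = - transpose (A::real^'n^'m)"
  by (simp add: vec_eq_iff transpose_def)
lemma transpose_zero': "transpose (0::real^'n^'m) = 0"
  by (simp add: vec_eq_iff transpose_def)
lemma neg_mv: "(- A) *v x = - ((A::real^'n^'m) *v x)"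
  by (simp add: vec_eq_iff matrix_vector_mult_def sum_negf)

lemma sym_KDK: "sym_mat D \<Longrightarrow> sym_mat (transpose (K::real^'n^'m) ** D ** K)"
  unfolding sym_mat_def by (simp add: matrix_transpose_mul matrix_mul_assoc)

lemma pos_def_coercive: assumes "pos_def (A::real^'n^'n)"
  shows "\<exists>c>0. \<forall>x. c * (norm x)^2 \<le> x \<bullet> (A *v x)"
proof -
  have cont: "continuous_on (sphere 0 1) (\<lambda>x::real^'n. x \<bullet> (A *v x))"
    by (intro continuous_intros matrix_vector_mult_linear_continuous_on[THEN continuous_on_compose2]) auto
  have ne: "sphere (0::real^'n) 1 \<noteq> {}"
    by (simp add: sphere_eq_empty)
  obtain v where v: "v \<in> sphere 0 1" and vmin: "\<And>y. y \<in> sphere 0 1 \<Longrightarrow> v \<bullet> (A *v v) \<le> y \<bullet> (A *v y)"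
    using continuous_attains_inf[OF compact_sphere ne cont] by blast
  have "v \<noteq> 0" using v by auto
  hence cpos: "v \<bullet> (A *v v) > 0" using assms unfolding pos_def_def by blast
  show ?thesis
  proof (intro exI[of _ "v \<bullet> (A *v v)"] conjI allI cpos)
    fix x :: "real^'n"
    show "v \<bullet> (A *v v) * (norm x)^2 \<le> x \<bullet> (A *v x)"
    proof (cases "x = 0")
      case True thus ?thesis by simp
    next
      case False
      let ?u = "(1 / norm x) *\<^sub>R x"
      have "?u \<in> sphere 0 1" using False by simp
      hence "v \<bullet> (A *v v) \<le> ?u \<bullet> (A *v ?u)" by (rule vmin)
      also have "?u \<bullet> (A *v ?u) = (x \<bullet> (A *v x)) / (norm x)^2"
        by (simp add: matrix_vector_mult_scaleR power2_eq_square)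
      finally show ?thesis using False by (simp add: field_simps)
    qed
  qed
qed

lemma scalar_dz:
  fixes u l t :: real
  assumes "u > 0" "l > 0"
  defines "d \<equiv> t - min u (max (-l) t)"
  shows "t\<^sup>2 - d\<^sup>2 \<ge> 0" and "t \<noteq> 0 \<Longrightarrow> t\<^sup>2 - d\<^sup>2 > 0"
    and "t\<^sup>2 - d\<^sup>2 \<ge> min u l * \<bar>t\<bar> - (min u l)\<^sup>2 / 4" and "t = 0 \<Longrightarrow> d = 0"
proof -
  let ?b = "min u l"
  have key: "t\<^sup>2 - d\<^sup>2 \<ge> min u l * \<bar>t\<bar> - (min u l)\<^sup>2 / 4 \<and> (t \<noteq> 0 \<longrightarrow> t\<^sup>2 - d\<^sup>2 > 0) \<and> t\<^sup>2 - d\<^sup>2 \<ge> 0"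
  proof -
    consider "-l \<le> t \<and> t \<le> u" | "t > u" | "t < -l" by linarith
    then show ?thesis
    proof cases
      case 1
      hence d0: "d = 0" unfolding d_def by auto
      have sq: "0 \<le> (\<bar>t\<bar> - ?b / 2)\<^sup>2" by simp
      have "(\<bar>t\<bar> - ?b / 2)\<^sup>2 = t\<^sup>2 - ?b * \<bar>t\<bar> + ?b\<^sup>2/4"
        by (simp add: power2_eq_square algebra_simps)
      with sq d0 show ?thesis by auto
    next
      case 2
      hence dd: "d = t - u" unfolding d_def using assms by auto
      have e: "t\<^sup>2 - d\<^sup>2 = u * (2*t - u)" unfolding dd by (simp add: power2_eq_square algebra_simps)
      have "u * t \<le> u * (2*t - u)" using 2 assms by (intro mult_left_mono) auto
      moreover have "?b * \<bar>t\<bar> \<le> u * t" using 2 assms by (auto intro: mult_right_mono)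
      moreover have "u * t > 0" using 2 assms by simp
      moreover have "?b\<^sup>2 \<ge> 0" by simp
      ultimately show ?thesis unfolding e by linarith
    next
      case 3
      hence dd: "d = t + l" unfolding d_def using assms by auto
      have e: "t\<^sup>2 - d\<^sup>2 = l * (-2*t - l)" unfolding dd by (simp add: power2_eq_square algebra_simps)
      have "l * (-t) \<le> l * (-2*t - l)" using 3 assms by (intro mult_left_mono) auto
      moreover have "?b * \<bar>t\<bar> \<le> l * (-t)" using 3 assms by (auto intro: mult_right_mono)
      moreover have "l * (-t) > 0" using 3 assms by (intro mult_pos_pos) auto
      moreover have "?b\<^sup>2 \<ge> 0" by simp
      ultimately show ?thesis unfolding e by linarith
    qed
  qed
  then show "t\<^sup>2 - d\<^sup>2 \<ge> 0" "t \<noteq> 0 \<Longrightarrow> t\<^sup>2 - d\<^sup>2 > 0" "t\<^sup>2 - d\<^sup>2 \<ge> min u l * \<bar>t\<bar> - (min u l)\<^sup>2 / 4"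
    by auto
  show "t = 0 \<Longrightarrow> d = 0" using assms unfolding d_def by auto
qed

lemma dz_nth: "dz ub lb v $ i = v$i - min (ub$i) (max (-(lb$i)) (v$i))"
  by (simp add: dz_def sat_def)
lemma sum3: "(\<Sum>i\<in>A. f i) - (\<Sum>i\<in>A. g i) + (\<Sum>i\<in>A. k i) = (\<Sum>i\<in>A. f i - g i + (k i::real))"
  by (simp add: sum.distrib sum_subtractf)

theorem lemma3:
  fixes ub lb :: "real^'m" and K :: "real^'n^'m" and P0 :: "real^'n^'n"
    and H Hp Hn :: "real^'m^'m"
  assumes "\<forall>i. ub$i > 0" and "\<forall>i. lb$i > 0"
    and "sym_mat P0"
    and "diag_mat H"
    and "pos_def (P0 + transpose K ** H ** K)"
    and "H = Hp - Hn"
    and "diag_mat Hp" and "pos_def Hp"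
    and "diag_mat Hn" and "psd Hn"
    and "psd (P0 - transpose K ** Hn ** K)"
  shows "(\<exists>T0 :: real^'m^'m. diag_mat T0 \<and> pos_def T0
            \<and> pos_def (blk11 (Qmat P0 K H))
            \<and> psd (Qmat P0 K H - Sigma0 K T0))
       \<and> (Vfun ub lb P0 K H 0 = 0 \<and> (\<forall>x. x \<noteq> 0 \<longrightarrow> Vfun ub lb P0 K H x > 0))
       \<and> filterlim (Vfun ub lb P0 K H) at_top at_infinity"
proof -
  define h where "h i = Hp$i$i" for i
  define nn where "nn i = Hn$i$i" for i
  have hpos: "h i > 0" for i unfolding h_def using assms(8) by (rule diag_entry_pos)
  have nnn: "nn i \<ge> 0" for i unfolding nn_def using assms(10) unfolding psd_def
    by (metis axis_quad)
  have Hq: "v \<bullet> (H *v u) = (\<Sum>i\<in>UNIV. (h i - nn i) * v$i * u$i)" for v u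
    using diag_quad[OF assms(4)] assms(6) by (simp add: h_def nn_def)
  have Hnq: "v \<bullet> (Hn *v u) = (\<Sum>i\<in>UNIV. nn i * v$i * u$i)" for v u
    using diag_quad[OF assms(9)] by (simp add: nn_def)
  define Mf where "Mf x = x \<bullet> (P0 *v x) - (\<Sum>i\<in>UNIV. nn i * (K *v x)$i * (K *v x)$i)" for x
  have Mf_nn: "Mf x \<ge> 0" for x
    using assms(11) unfolding psd_def Mf_def
    by (simp add: matrix_vector_mult_diff_rdistrib inner_diff_right quad_KDK Hnq)
  have Pf: "x \<bullet> ((P0 + transpose K ** H ** K) *v x) = Mf x + (\<Sum>i\<in>UNIV. h i * (K *v x)$i * (K *v x)$i)" for x
  proof -
    have "x \<bullet> ((P0 + transpose K ** H ** K) *v x) = x \<bullet> (P0 *v x) + (\<Sum>i\<in>UNIV. (h i - nn i) * (K *v x)$i * (K *v x)$i)"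
      by (simp add: matrix_vector_mult_add_rdistrib inner_add_right quad_KDK Hq)
    also have "\<dots> = Mf x + (\<Sum>i\<in>UNIV. h i * (K *v x)$i * (K *v x)$i)"
      unfolding Mf_def by (simp add: algebra_simps sum_subtractf)
    finally show ?thesis .
  qed
  have V: "Vfun ub lb P0 K H x = (1/2) * (Mf x + (\<Sum>i\<in>UNIV. h i * (((K *v x)$i)\<^sup>2 - ((dz ub lb (K *v x))$i)\<^sup>2) + nn i * ((dz ub lb (K *v x))$i)\<^sup>2))" for x
  proof -
    let ?y = "K *v x" and ?d = "dz ub lb (K *v x)"
    have "Vfun ub lb P0 K H x = (1/2) * (x \<bullet> (P0 *v x) + (\<Sum>i\<in>UNIV. (h i - nn i) * ?y$i * ?y$i) - (\<Sum>i\<in>UNIV. (h i - nn i) * ?d$i * ?d$i))"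
      unfolding Vfun_def by (simp add: quad_KDK Hq)
    also have "x \<bullet> (P0 *v x) = Mf x + (\<Sum>i\<in>UNIV. nn i * ?y$i * ?y$i)" unfolding Mf_def by simp
    also have "Mf x + (\<Sum>i\<in>UNIV. nn i * ?y$i * ?y$i) + (\<Sum>i\<in>UNIV. (h i - nn i) * ?y$i * ?y$i) - (\<Sum>i\<in>UNIV. (h i - nn i) * ?d$i * ?d$i)
       = Mf x + ((\<Sum>i\<in>UNIV. nn i * ?y$i * ?y$i) + (\<Sum>i\<in>UNIV. (h i - nn i) * ?y$i * ?y$i) - (\<Sum>i\<in>UNIV. (h i - nn i) * ?d$i * ?d$i))"
      by simp
    also have "(\<Sum>i\<in>UNIV. nn i * ?y$i * ?y$i) + (\<Sum>i\<in>UNIV. (h i - nn i) * ?y$i * ?y$i) - (\<Sum>i\<in>UNIV. (h i - nn i) * ?d$i * ?d$i)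
       = (\<Sum>i\<in>UNIV. h i * ((?y$i)\<^sup>2 - (?d$i)\<^sup>2) + nn i * (?d$i)\<^sup>2)"
      by (simp add: sum.distrib[symmetric] sum_subtractf[symmetric] power2_eq_square algebra_simps)
    finally show ?thesis .
  qed
  let ?y = "\<lambda>x. K *v x" and ?d = "\<lambda>x. dz ub lb (K *v x)"
  have dzc: "(?d x)$i = (?y x)$i - min (ub$i) (max (-(lb$i)) ((?y x)$i))" for x i by (rule dz_nth)
  note sd = scalar_dz[OF assms(1)[rule_format] assms(2)[rule_format]]
  define b where "b i = min (ub$i) (lb$i)" for i
  have term_nn: "h i * (((?y x)$i)\<^sup>2 - ((?d x)$i)\<^sup>2) + nn i * ((?d x)$i)\<^sup>2 \<ge> 0" for x i
    using scalar_dz(1)[OF assms(1)[rule_format, of i] assms(2)[rule_format, of i], of "(?y x)$i"] hpos[of i] nnn[of i] unfolding dzc[symmetric] by simp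
  have term_pos: "(?y x)$i \<noteq> 0 \<Longrightarrow> h i * (((?y x)$i)\<^sup>2 - ((?d x)$i)\<^sup>2) + nn i * ((?d x)$i)\<^sup>2 > 0" for x i
    using scalar_dz(2)[OF assms(1)[rule_format, of i] assms(2)[rule_format, of i], of "(?y x)$i"] hpos[of i] nnn[of i] unfolding dzc[symmetric]
    by (simp add: add_pos_nonneg)
  have term_lb: "h i * (((?y x)$i)\<^sup>2 - ((?d x)$i)\<^sup>2) + nn i * ((?d x)$i)\<^sup>2 \<ge> h i * b i * \<bar>(?y x)$i\<bar> - h i * (b i)\<^sup>2 / 4" for x i
  proof -
    have "h i * (b i * \<bar>(?y x)$i\<bar> - (b i)\<^sup>2 / 4) \<le> h i * (((?y x)$i)\<^sup>2 - ((?d x)$i)\<^sup>2)"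
      using scalar_dz(3)[OF assms(1)[rule_format, of i] assms(2)[rule_format, of i], of "(?y x)$i"] hpos[of i] unfolding dzc[symmetric] b_def by (intro mult_left_mono) auto
    moreover have "nn i * ((?d x)$i)\<^sup>2 \<ge> 0" using nnn[of i] by simp
    ultimately show ?thesis by (simp add: algebra_simps)
  qed
  have dz0: "dz ub lb 0 = 0"
    using assms(1,2) by (auto simp: vec_eq_iff dz_nth min_def max_def less_le_not_le)
  have V0: "Vfun ub lb P0 K H 0 = 0"
    unfolding Vfun_def by (simp add: dz0)
  have Vpos: "\<forall>x. x \<noteq> 0 \<longrightarrow> Vfun ub lb P0 K H x > 0"
  proof (intro allI impI)
    fix x :: "real^'n" assume x0: "x \<noteq> 0"
    show "Vfun ub lb P0 K H x > 0"
    proof (cases "?y x = 0")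
      case True
      have "x \<bullet> ((P0 + transpose K ** H ** K) *v x) > 0" using assms(5) x0 unfolding pos_def_def by blast
      then show ?thesis unfolding Vfun_def True dz0
        by (simp add: matrix_vector_mult_add_rdistrib inner_add_right quad_KDK True)
    next
      case False
      then obtain i where "(?y x)$i \<noteq> 0" by (auto simp: vec_eq_iff)
      hence "(\<Sum>i\<in>UNIV. h i * (((?y x)$i)\<^sup>2 - ((?d x)$i)\<^sup>2) + nn i * ((?d x)$i)\<^sup>2) > 0"
        by (intro sum_pos2[where i=i]) (auto intro: term_nn term_pos)
      then show ?thesis unfolding V using Mf_nn[of x] by simp
    qed
  qed
  have bpos: "b i > 0" for i unfolding b_def using assms(1,2) by simp
  have Vlb: "Vfun ub lb P0 K H x \<ge> (1/2) * (Mf x + (\<Sum>i\<in>UNIV. h i * b i * \<bar>(?y x)$i\<bar>) - (\<Sum>i\<in>UNIV. h i * (b i)\<^sup>2 / 4))" for x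
  proof -
    have "(\<Sum>i\<in>UNIV. h i * b i * \<bar>(?y x)$i\<bar>) - (\<Sum>i\<in>UNIV. h i * (b i)\<^sup>2 / 4)
        = (\<Sum>i\<in>UNIV. h i * b i * \<bar>(?y x)$i\<bar> - h i * (b i)\<^sup>2 / 4)" by (simp add: sum_subtractf)
    also have "\<dots> \<le> (\<Sum>i\<in>UNIV. h i * (((?y x)$i)\<^sup>2 - ((?d x)$i)\<^sup>2) + nn i * ((?d x)$i)\<^sup>2)"
      by (intro sum_mono term_lb)
    finally show ?thesis unfolding V by simp
  qed
  obtain c where cpos: "c > 0" and cb: "\<And>x. c * (norm x)^2 \<le> Mf x + (\<Sum>i\<in>UNIV. h i * (?y x)$i * (?y x)$i)"
    using pos_def_coercive[OF assms(5)] Pf by metis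
  have lim: "filterlim (Vfun ub lb P0 K H) at_top at_infinity"
    unfolding filterlim_at_top
  proof
    fix R :: real
    define Cc where "Cc = (\<Sum>i\<in>UNIV. h i * (b i)\<^sup>2 / 4)"
    define T where "T = 2 * R + Cc"
    define W where "W = (\<Sum>i\<in>UNIV. h i * (T / (h i * b i))\<^sup>2)"
    show "\<forall>\<^sub>F x in at_infinity. R \<le> Vfun ub lb P0 K H x"
    proof (rule eventually_at_infinityI[of "max 1 ((2*R + W + Cc)/c)"])
      fix x :: "real^'n" assume nx: "max 1 ((2*R + W + Cc)/c) \<le> norm x"
      define S1 where "S1 = (\<Sum>i\<in>UNIV. h i * b i * \<bar>(?y x)$i\<bar>)"
      have tnn: "0 \<le> h i * b i * \<bar>(?y x)$i\<bar>" for i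
        using hpos[of i] bpos[of i] by (intro mult_nonneg_nonneg) auto
      have S1nn: "S1 \<ge> 0" unfolding S1_def using tnn by (intro sum_nonneg) auto
      have VV: "Vfun ub lb P0 K H x \<ge> (1/2) * (Mf x + S1 - Cc)" using Vlb[of x] unfolding S1_def Cc_def .
      show "R \<le> Vfun ub lb P0 K H x"
      proof (cases "\<exists>i. h i * b i * \<bar>(?y x)$i\<bar> > T")
        case True
        then obtain i where i: "h i * b i * \<bar>(?y x)$i\<bar> > T" by blast
        have "h i * b i * \<bar>(?y x)$i\<bar> \<le> S1" unfolding S1_def
          by (rule member_le_sum) (use tnn in auto)
        with i have "S1 > 2 * R + Cc" unfolding T_def by linarith
        hence "R < (1/2) * (S1 - Cc)" by (simp add: field_simps)
        moreover have "(1/2) * (S1 - Cc) \<le> (1/2) * (Mf x + S1 - Cc)" using Mf_nn[of x] by simp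
        ultimately show ?thesis using VV by linarith
      next
        case False
        have "(\<Sum>i\<in>UNIV. h i * (?y x)$i * (?y x)$i) \<le> W" unfolding W_def
        proof (intro sum_mono)
          fix i
          have hb: "h i * b i > 0" using hpos bpos by simp
          have "h i * b i * \<bar>(?y x)$i\<bar> \<le> T" using False by (meson not_less)
          hence "\<bar>(?y x)$i\<bar> \<le> T / (h i * b i)" using hb
            by (simp add: pos_le_divide_eq mult.commute)
          hence "\<bar>(?y x)$i\<bar>\<^sup>2 \<le> (T / (h i * b i))\<^sup>2" by (intro power_mono) auto
          hence "(?y x)$i * (?y x)$i \<le> (T / (h i * b i))\<^sup>2" by (simp add: power2_eq_square)
          thus "h i * (?y x)$i * (?y x)$i \<le> h i * (T / (h i * b i))\<^sup>2"
            using hpos[of i] by (simp add: mult.assoc mult_left_mono)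
        qed
        with cb[of x] have Mfb: "Mf x \<ge> c * (norm x)^2 - W" by linarith
        have n1: "norm x \<ge> 1" and n2: "norm x \<ge> (2*R + W + Cc)/c" using nx by auto
        have "norm x * 1 \<le> norm x * norm x" using n1 by (intro mult_left_mono) auto
        hence "norm x \<le> (norm x)^2" by (simp add: power2_eq_square)
        with n2 have "(2*R + W + Cc)/c \<le> (norm x)^2" by linarith
        hence "2*R + W + Cc \<le> c * (norm x)^2" using cpos by (simp add: field_simps)
        moreover have "Mf x + S1 - Cc \<le> 2 * Vfun ub lb P0 K H x" using VV by simp
        ultimately show ?thesis using Mfb S1nn by linarith
      qed
    qed
  qed
  define T0 where "T0 = (1/2::real) *\<^sub>R Hp"
  define PK where "PK = P0 + transpose K ** H ** K"
  have T0d: "diag_mat T0" using assms(7) unfolding T0_def diag_mat_def by simp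
  have T0e: "T0$i$i = h i / 2" for i unfolding T0_def h_def by simp
  have T0s: "transpose T0 = T0" using diag_sym[OF T0d] unfolding sym_mat_def .
  have T0q: "v \<bullet> (T0 *v u) = (\<Sum>i\<in>UNIV. (h i / 2) * v$i * u$i)" for v u
    using diag_quad[OF T0d] by (simp add: T0e)
  have T0pd: "pos_def T0"
    unfolding pos_def_def
  proof (intro conjI allI impI)
    show "sym_mat T0" by (rule diag_sym[OF T0d])
    fix x :: "real^'m" assume "x \<noteq> 0"
    hence "x \<bullet> (Hp *v x) > 0" using assms(8) unfolding pos_def_def by blast
    thus "x \<bullet> (T0 *v x) > 0" unfolding T0_def by (simp add: scaleR_matrix_vector_assoc[symmetric])
  qed
  have PKs: "transpose PK = PK" using assms(5) unfolding pos_def_def sym_mat_def PK_def by blast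
  have Hs: "transpose H = H" using diag_sym[OF assms(4)] unfolding sym_mat_def .
  have blk11pd: "pos_def (blk11 (Qmat P0 K H))"
  proof -
    have e: "blk11 (Qmat P0 K H) = (1/2::real) *\<^sub>R PK"
      unfolding Qmat_def blk_scale blk11_blk PK_def ..
    show ?thesis unfolding e pos_def_def sym_mat_def
    proof (intro conjI allI impI)
      show "transpose ((1/2::real) *\<^sub>R PK) = (1/2::real) *\<^sub>R PK" by (simp add: transpose_scalar PKs)
      fix x :: "real^'n" assume "x \<noteq> 0"
      hence "x \<bullet> (PK *v x) > 0" using assms(5) unfolding pos_def_def PK_def by blast
      thus "x \<bullet> (((1/2::real) *\<^sub>R PK) *v x) > 0" by (simp add: scaleR_matrix_vector_assoc[symmetric])
    qed
  qed
  define D' where "D' = (1/2::real) *\<^sub>R (-H) + 2 *\<^sub>R T0"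
  have D'd: "diag_mat D'" using assms(4) T0d unfolding D'_def diag_mat_def by simp
  have D'e: "D'$i$i = (h i + nn i) / 2" for i
    unfolding D'_def T0_def assms(6) by (simp add: h_def nn_def field_simps)
  have D's: "transpose D' = D'" using diag_sym[OF D'd] unfolding sym_mat_def .
  have QS: "Qmat P0 K H - Sigma0 K T0 = blk ((1/2::real) *\<^sub>R PK) (- (transpose K ** T0)) (- (T0 ** K)) D'"
    unfolding Qmat_def Sigma0_def blk_scale blk_diff PK_def D'_def by simp
  have psdQ: "psd (Qmat P0 K H - Sigma0 K T0)"
    unfolding QS psd_def sym_mat_def
  proof (intro conjI allI)
    show "transpose (blk ((1/2::real) *\<^sub>R PK) (- (transpose K ** T0)) (- (T0 ** K)) D') =
      blk ((1/2::real) *\<^sub>R PK) (- (transpose K ** T0)) (- (T0 ** K)) D'"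
      unfolding blk_transpose by (simp add: transpose_scalar PKs D's transpose_neg' matrix_transpose_mul T0s)
    fix z :: "real^('n+'m)"
    define xa where "xa = (\<chi> a. z$Inl a)"
    define w where "w = (\<chi> b. z$Inr b)"
    have "z \<bullet> (blk ((1/2::real) *\<^sub>R PK) (- (transpose K ** T0)) (- (T0 ** K)) D' *v z)
       = (1/2) * (Mf xa + (\<Sum>i\<in>UNIV. h i * (?y xa)$i * (?y xa)$i))
         - (\<Sum>i\<in>UNIV. (h i / 2) * (?y xa)$i * w$i) - (\<Sum>i\<in>UNIV. (h i / 2) * w$i * (?y xa)$i)
         + (\<Sum>i\<in>UNIV. ((h i + nn i) / 2) * w$i * w$i)"
      unfolding blk_quad xa_def[symmetric] w_def[symmetric]
      by (simp add: scaleR_matrix_vector_assoc[symmetric] neg_mv matrix_vector_mul_assoc[symmetric]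
          dot_transpose dot_vm T0q diag_quad[OF D'd] D'e Pf[unfolded PK_def[symmetric]])
    also have "\<dots> = (1/2) * Mf xa + (\<Sum>i\<in>UNIV. (h i / 2) * ((?y xa)$i - w$i)\<^sup>2 + (nn i / 2) * (w$i)\<^sup>2)"
      by (simp add: sum.distrib[symmetric] sum_subtractf[symmetric] power2_eq_square algebra_simps sum_distrib_left)
        (intro sum.cong refl, simp add: field_simps)
    also have "\<dots> \<ge> 0"
      using Mf_nn[of xa] hpos nnn by (intro add_nonneg_nonneg sum_nonneg mult_nonneg_nonneg divide_nonneg_pos) (auto intro: less_imp_le)
    finally show "0 \<le> z \<bullet> (blk ((1/2::real) *\<^sub>R PK) (- (transpose K ** T0)) (- (T0 ** K)) D' *v z)" .
  qed
  show ?thesis using T0d T0pd blk11pd psdQ V0 Vpos lim by blast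
qed
end
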